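(* \[ \sum_{\substack{a\ge b,\ c\ge d\\ ad-bc=1}}\frac{1}{(ac+bd)\big(a(a+c)+b(b+d)\big)\big((a+c)c+(b+d)d\big)}=1-\frac{\pi}{4}, \] where the sum is over all nonnegative integers $a,b,c,d$ with $a\ge b$, $c\ge d$ and $ad-bc=1$. *)

theory Defs
  imports "HOL-Analysis.Analysis"
begin

end

theory Submission
  imports Defs
begin

type_synonym quad = "nat \<times> nat \<times> nat \<times> nat"

definition SS :: "quad set" where
  "SS = {(a, b, c, d). b \<le> a \<and> d \<le> c \<and> int a * int d - int b * int c = 1}"

fun chL :: "quad \<Rightarrow> quad" where "chL (a, b, c, d) = (a, b, a + c, b + d)"
fun chR :: "quad \<Rightarrow> quad" where "chR (a, b, c, d) = (a + c, b + d, c, d)"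

fun lev :: "nat \<Rightarrow> quad set" where
  "lev 0 = {(1, 0, 1, 1)}"
| "lev (Suc n) = chL ` lev n \<union> chR ` lev n"

fun pp :: "quad \<Rightarrow> real" where "pp (a, b, c, d) = real (a * c + b * d)"

fun msz :: "quad \<Rightarrow> nat" where "msz (a, b, c, d) = a + b + c + d"

lemma chL_S: "M \<in> SS \<Longrightarrow> chL M \<in> SS"
  by (cases M) (auto simp: SS_def algebra_simps)

lemma chR_S: "M \<in> SS \<Longrightarrow> chR M \<in> SS"
  by (cases M) (auto simp: SS_def algebra_simps)

lemma lev_S: "lev n \<subseteq> SS"
proof (induction n)
  case 0
  then show ?case by (auto simp: SS_def)
next
  case (Suc n)
  show ?case
  proof
    fix x assume "x \<in> lev (Suc n)"
    then obtain y where y: "y \<in> lev n" "x = chL y \<or> x = chR y" by auto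
    then show "x \<in> SS" by (metis Suc.IH chL_S chR_S subsetD)
  qed
qed

lemma lev_finite: "finite (lev n)"
  by (induction n) auto

lemma inj_chL: "inj chL"
  unfolding inj_def by auto

lemma inj_chR: "inj chR"
  unfolding inj_def by auto

lemma chLR_disj: "M \<in> SS \<Longrightarrow> N \<in> SS \<Longrightarrow> chL M \<noteq> chR N"
  by (cases M; cases N) (auto simp: SS_def)

lemma root_not_chL: "M \<in> SS \<Longrightarrow> chL M \<noteq> (1, 0, 1, 1)"
  by (cases M) (auto simp: SS_def)

lemma root_not_chR: "M \<in> SS \<Longrightarrow> chR M \<noteq> (1, 0, 1, 1)"
  by (cases M) (auto simp: SS_def)

lemma lev_disj: "M \<in> lev n \<Longrightarrow> M \<in> lev m \<Longrightarrow> n = m"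
proof (induction n arbitrary: M m)
  case 0
  then have Mr: "M = (1, 0, 1, 1)" by auto
  show ?case
  proof (cases m)
    case (Suc k)
    then obtain M' where "M' \<in> lev k" "M = chL M' \<or> M = chR M'"
      using 0 by auto
    then show ?thesis using Mr lev_S root_not_chL root_not_chR by blast
  qed auto
next
  case (Suc n)
  show ?case
  proof (cases m)
    case 0
    then have Mr: "M = (1, 0, 1, 1)" using Suc.prems by auto
    obtain M' where "M' \<in> lev n" "M = chL M' \<or> M = chR M'"
      using Suc.prems(1) by auto
    then show ?thesis using Mr lev_S root_not_chL root_not_chR by blast
  next
    case (Suc k)
    obtain M' where M': "M' \<in> lev n" "M = chL M' \<or> M = chR M'"
      using Suc.prems(1) by auto
    obtain M'' where M'': "M'' \<in> lev k" "M = chL M'' \<or> M = chR M''"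
      using Suc.prems(2) Suc by auto
    have S1: "M' \<in> SS" "M'' \<in> SS" using M'(1) M''(1) lev_S by auto
    have "M' = M''"
      using M'(2) M''(2) chLR_disj[OF S1] chLR_disj[OF S1(2) S1(1)]
        injD[OF inj_chL, of M' M''] injD[OF inj_chR, of M' M''] by metis
    then show ?thesis using Suc.IH M' M'' Suc by auto
  qed
qed

lemma parent_exists:
  assumes "M \<in> SS" "M \<noteq> (1, 0, 1, 1)"
  shows "\<exists>M'. M' \<in> SS \<and> msz M' < msz M \<and> (M = chL M' \<or> M = chR M')"
proof -
  obtain a b c d where Md: "M = (a, b, c, d)" by (cases M)
  have h: "b \<le> a" "d \<le> c" "int a * int d - int b * int c = 1"
    using assms Md by (auto simp: SS_def)
  define \<alpha> where "\<alpha> = int a - int b"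
  define \<gamma> where "\<gamma> = int c - int d"
  have det: "\<alpha> * int d - int b * \<gamma> = 1"
    using h(3) unfolding \<alpha>_def \<gamma>_def by (simp add: algebra_simps)
  have a0: "\<alpha> \<ge> 0" "\<gamma> \<ge> 0" using h unfolding \<alpha>_def \<gamma>_def by auto
  have caseAB: "(\<alpha> \<le> \<gamma> \<and> int b \<le> int d) \<or> (\<gamma> \<le> \<alpha> \<and> int d \<le> int b)"
  proof (rule ccontr)
    assume nc: "\<not> ?thesis"
    have "(\<alpha> > \<gamma> \<and> int d > int b) \<or> (\<gamma> > \<alpha> \<and> int b > int d)"
      using nc by auto
    then show False
    proof
      assume A: "\<alpha> > \<gamma> \<and> int d > int b"
      have "\<alpha> * int d \<ge> (\<gamma> + 1) * (int b + 1)"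
        using A a0 by (intro mult_mono) auto
      then have "\<gamma> + int b \<le> 0" using det by (simp add: algebra_simps)
      then have g0: "\<gamma> = 0" "b = 0" using a0 by auto
      then have "\<alpha> * int d = 1" using det by simp
      then have "\<alpha> = 1" "int d = 1" using a0 by (auto simp: zmult_eq_1_iff)
      then have "M = (1, 0, 1, 1)" using g0 Md unfolding \<alpha>_def \<gamma>_def by auto
      then show False using assms by simp
    next
      assume B: "\<gamma> > \<alpha> \<and> int b > int d"
      have "int b * \<gamma> \<ge> (int d + 1) * (\<alpha> + 1)"
        using B a0 by (intro mult_mono) auto
      then show False using det a0 by (simp add: algebra_simps)
    qed
  qed
  show ?thesis
  proof (cases "\<alpha> \<le> \<gamma> \<and> int b \<le> int d")
    case True
    have ac: "a \<le> c" using True h unfolding \<alpha>_def \<gamma>_def by auto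
    have a1: "a \<ge> 1" using h by (cases a) auto
    have "(a, b, c - a, d - b) \<in> SS"
      using True h ac unfolding SS_def \<alpha>_def \<gamma>_def
      by (auto simp: of_nat_diff algebra_simps)
    moreover have "M = chL (a, b, c - a, d - b)" using True ac Md by auto
    moreover have "msz (a, b, c - a, d - b) < msz M" using ac True a1 Md by auto
    ultimately show ?thesis by blast
  next
    case False
    then have F: "\<gamma> \<le> \<alpha> \<and> int d \<le> int b" using caseAB by auto
    have ca: "c \<le> a" using F h unfolding \<alpha>_def \<gamma>_def by auto
    have c1: "c \<ge> 1" using h by (cases c) auto
    have "(a - c, b - d, c, d) \<in> SS"
      using F h ca unfolding SS_def \<alpha>_def \<gamma>_def
      by (auto simp: of_nat_diff algebra_simps)
    moreover have "M = chR (a - c, b - d, c, d)" using F ca Md by auto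
    moreover have "msz (a - c, b - d, c, d) < msz M" using ca F c1 Md by auto
    ultimately show ?thesis by blast
  qed
qed

lemma S_cover: "M \<in> SS \<Longrightarrow> \<exists>n. M \<in> lev n"
proof (induction "msz M" arbitrary: M rule: less_induct)
  case less
  show ?case
  proof (cases "M = (1, 0, 1, 1)")
    case True
    then show ?thesis by (intro exI[of _ 0]) auto
  next
    case False
    then obtain M' where M': "M' \<in> SS" "msz M' < msz M" "M = chL M' \<or> M = chR M'"
      using parent_exists less.prems by blast
    then obtain n where "M' \<in> lev n" using less.hyps by blast
    then have "M \<in> lev (Suc n)" using M'(3) by auto
    then show ?thesis by blast
  qed
qed


definition Fq :: "quad \<Rightarrow> real" where
  "Fq = (\<lambda>(a::nat, b::nat, c::nat, d::nat).
            1 / (real (a * c + b * d) * real (a * (a + c) + b * (b + d))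
                 * real ((a + c) * c + (b + d) * d)))"

lemma Fq_eq: "Fq M = 1 / (pp M * pp (chL M) * pp (chR M))"
  by (cases M) (simp add: Fq_def)

lemma Fq_nonneg: "Fq M \<ge> 0"
  by (cases M) (simp add: Fq_def)

lemma pp_ge1: "M \<in> SS \<Longrightarrow> pp M \<ge> 1"
proof -
  assume M: "M \<in> SS"
  obtain a b c d where Md: "M = (a, b, c, d)" by (cases M)
  have h: "b \<le> a" "d \<le> c" "int a * int d - int b * int c = 1" using M Md by (auto simp: SS_def)
  have "a \<ge> 1" using h by (cases a) auto
  moreover have "c \<ge> 1" using h by (cases c) auto
  ultimately have "a * c + b * d \<ge> 1" by (simp add: le_add1 order_trans[OF _ le_add1])
  then have "(1::real) \<le> real (a * c + b * d)" by (metis of_nat_1 of_nat_le_iff)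
  then show ?thesis using Md by (simp del: of_nat_add of_nat_mult)
qed

lemma pp_chL: "M \<in> SS \<Longrightarrow> pp (chL M) \<ge> pp M + 1"
proof -
  assume M: "M \<in> SS"
  obtain a b c d where Md: "M = (a, b, c, d)" by (cases M)
  have h: "b \<le> a" "d \<le> c" "int a * int d - int b * int c = 1" using M Md by (auto simp: SS_def)
  have "a \<ge> 1" using h by (cases a) auto
  then have "a * a \<ge> 1" by simp
  moreover have "a * (a + c) + b * (b + d) = (a * c + b * d) + (a * a + b * b)" by (simp add: algebra_simps)
  ultimately have "a * (a + c) + b * (b + d) \<ge> (a * c + b * d) + 1" by linarith
  then have "real (a * (a + c) + b * (b + d)) \<ge> real (a * c + b * d) + 1"
    by (metis of_nat_1 of_nat_add of_nat_le_iff)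
  then show ?thesis using Md by (simp del: of_nat_add of_nat_mult)
qed

lemma pp_chR: "M \<in> SS \<Longrightarrow> pp (chR M) \<ge> pp M + 1"
proof -
  assume M: "M \<in> SS"
  obtain a b c d where Md: "M = (a, b, c, d)" by (cases M)
  have h: "b \<le> a" "d \<le> c" "int a * int d - int b * int c = 1" using M Md by (auto simp: SS_def)
  have "c \<ge> 1" using h by (cases c) auto
  then have "c * c \<ge> 1" by simp
  moreover have "(a + c) * c + (b + d) * d = (a * c + b * d) + (c * c + d * d)" by (simp add: algebra_simps)
  ultimately have "(a + c) * c + (b + d) * d \<ge> (a * c + b * d) + 1" by linarith
  then have "real ((a + c) * c + (b + d) * d) \<ge> real (a * c + b * d) + 1"
    by (metis of_nat_1 of_nat_add of_nat_le_iff)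
  then show ?thesis using Md by (simp del: of_nat_add of_nat_mult)
qed

lemma key_id: "M \<in> SS \<Longrightarrow> pp (chL M) * pp (chR M) - pp M * (pp (chL M) + pp (chR M)) = 1"
proof -
  assume M: "M \<in> SS"
  obtain a b c d where Md: "M = (a, b, c, d)" by (cases M)
  have h: "int a * int d - int b * int c = 1" using M Md by (auto simp: SS_def)
  then have hr: "real a * real d - real b * real c = 1"
    by (metis of_int_1 of_int_diff of_int_mult of_int_of_nat_eq)
  have "pp (chL M) * pp (chR M) - pp M * (pp (chL M) + pp (chR M))
        = (real a * real d - real b * real c)^2"
    using Md by (simp add: algebra_simps power2_eq_square)
  then show ?thesis using hr by simp
qed

lemma Fq_tele: "M \<in> SS \<Longrightarrow> Fq M = 1 / pp M - 1 / pp (chL M) - 1 / pp (chR M)"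
proof -
  assume M: "M \<in> SS"
  have p: "pp M > 0" "pp (chL M) > 0" "pp (chR M) > 0"
    using pp_ge1[OF M] pp_chL[OF M] pp_chR[OF M] by auto
  have k: "pp (chL M) * pp (chR M) - pp M * (pp (chL M) + pp (chR M)) = 1" using key_id[OF M] .
  show ?thesis unfolding Fq_eq using p k by (simp add: field_simps)
qed

lemma arctan_tele: "M \<in> SS \<Longrightarrow> arctan (1 / pp M) = arctan (1 / pp (chL M)) + arctan (1 / pp (chR M))"
proof -
  assume M: "M \<in> SS"
  define p where "p = pp M"
  define q where "q = pp (chL M)"
  define r where "r = pp (chR M)"
  have p: "p \<ge> 1" "q \<ge> 2" "r \<ge> 2"
    using pp_ge1[OF M] pp_chL[OF M] pp_chR[OF M] unfolding p_def q_def r_def by auto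
  have k: "q * r - p * (q + r) = 1" using key_id[OF M] unfolding p_def q_def r_def .
  have "arctan (1 / q) + arctan (1 / r) = arctan ((1 / q + 1 / r) / (1 - 1 / q * (1 / r)))"
    using p by (intro arctan_add) auto
  also have "(1 / q + 1 / r) / (1 - 1 / q * (1 / r)) = 1 / p"
  proof -
    have e1: "(1 / q + 1 / r) / (1 - 1 / q * (1 / r)) = (q + r) / (q * r - 1)"
    proof -
      have "q * r \<ge> 2 * 2" using p by (intro mult_mono) auto
      then have "q * r - 1 \<noteq> 0" by simp
      then show ?thesis using p by (simp add: field_simps)
    qed
    have "q * r - 1 = p * (q + r)" using k by simp
    then have "(q + r) / (q * r - 1) = 1 / p" using p by simp
    then show ?thesis using e1 by simp
  qed
  finally show ?thesis unfolding p_def q_def r_def by simp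
qed

lemma sum_lev_Suc: "sum \<phi> (lev (Suc n)) = sum (\<lambda>M. \<phi> (chL M) + \<phi> (chR M)) (lev n)"
proof -
  have d: "chL ` lev n \<inter> chR ` lev n = {}"
    using lev_S chLR_disj by blast
  have "sum \<phi> (lev (Suc n)) = sum \<phi> (chL ` lev n) + sum \<phi> (chR ` lev n)"
    using d lev_finite by (simp add: sum.union_disjoint)
  also have "\<dots> = sum (\<phi> \<circ> chL) (lev n) + sum (\<phi> \<circ> chR) (lev n)"
    using sum.reindex[where h=chL and A="lev n" and g=\<phi>, OF inj_on_subset[OF inj_chL subset_UNIV]]
      sum.reindex[where h=chR and A="lev n" and g=\<phi>, OF inj_on_subset[OF inj_chR subset_UNIV]] by simp
  finally show ?thesis by (simp add: sum.distrib)
qed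

lemma theta_sum: "(\<Sum>M\<in>lev n. arctan (1 / pp M)) = pi / 4"
proof (induction n)
  case 0
  then show ?case by (simp add: arctan_one)
next
  case (Suc n)
  have "(\<Sum>M\<in>lev (Suc n). arctan (1 / pp M)) = (\<Sum>M\<in>lev n. arctan (1 / pp M))"
    unfolding sum_lev_Suc
  proof (rule sum.cong[OF refl])
    fix M assume "M \<in> lev n"
    then have "M \<in> SS" using lev_S by auto
    from arctan_tele[OF this]
    show "arctan (1 / pp (chL M)) + arctan (1 / pp (chR M)) = arctan (1 / pp M)" by simp
  qed
  then show ?case using Suc by simp
qed

definition H :: "nat \<Rightarrow> real" where "H n = (\<Sum>M\<in>lev n. 1 / pp M)"

lemma partial: "(\<Sum>k<N. sum Fq (lev k)) = 1 - H N"
proof (induction N)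
  case 0
  then show ?case by (simp add: H_def)
next
  case (Suc N)
  have "H (Suc N) = (\<Sum>M\<in>lev N. 1 / pp M - Fq M)"
    unfolding H_def sum_lev_Suc
  proof (rule sum.cong[OF refl])
    fix M assume "M \<in> lev N"
    then have "M \<in> SS" using lev_S by auto
    from Fq_tele[OF this] show "1 / pp (chL M) + 1 / pp (chR M) = 1 / pp M - Fq M" by simp
  qed
  also have "\<dots> = H N - sum Fq (lev N)" by (simp add: H_def sum_subtractf)
  finally show ?case using Suc by simp
qed

lemma pp_lev: "M \<in> lev n \<Longrightarrow> pp M \<ge> real n + 1"
proof (induction n arbitrary: M)
  case 0
  then show ?case by simp
next
  case (Suc n)
  then obtain M' where M': "M' \<in> lev n" "M = chL M' \<or> M = chR M'" by auto
  have S': "M' \<in> SS" using M' lev_S by auto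
  have "pp M \<ge> pp M' + 1"
    using M'(2) pp_chL[OF S'] pp_chR[OF S'] by (elim disjE) simp_all
  moreover have "pp M' \<ge> real n + 1" by (rule Suc.IH[OF M'(1)])
  ultimately show ?case by simp
qed

lemma H_le1: "H N \<le> 1"
proof -
  have "0 \<le> (\<Sum>k<N. sum Fq (lev k))" by (intro sum_nonneg Fq_nonneg)
  then show ?thesis using partial[of N] by simp
qed

lemma x_arctan: assumes "0 \<le> x" "x \<le> 1" shows "x - arctan x \<le> x ^ 3"
proof (cases "x < 1")
  case True
  have "(\<Sum>k<2 * 1. (- 1) ^ k * (1 / real (k * 2 + 1) * x ^ (k * 2 + 1))) \<le> arctan x"
    using arctan_lower_bound[OF assms(1) True] .
  then have "x - x ^ 3 / 3 \<le> arctan x" by (simp add: numeral_2_eq_2 power3_eq_cube)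
  moreover have "x ^ 3 \<ge> 0" using assms by simp
  ultimately show ?thesis by linarith
next
  case False
  then have "x = 1" using assms by simp
  then show ?thesis using arctan_one pi_gt_zero by simp
qed

lemma H_bounds: "pi / 4 \<le> H N" "H N \<le> pi / 4 + 1 / (real N + 1)"
proof -
  have d: "H N - pi / 4 = (\<Sum>M\<in>lev N. 1 / pp M - arctan (1 / pp M))"
    unfolding H_def theta_sum[of N, symmetric] by (simp add: sum_subtractf)
  have pos: "\<And>M. M \<in> lev N \<Longrightarrow> pp M \<ge> 1" by (metis lev_S pp_ge1 subsetD)
  have "0 \<le> (\<Sum>M\<in>lev N. 1 / pp M - arctan (1 / pp M))"
  proof (rule sum_nonneg)
    fix M assume "M \<in> lev N"
    then have "0 \<le> 1 / pp M" using pos[of M] by simp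
    then show "0 \<le> 1 / pp M - arctan (1 / pp M)" using arctan_le_self by simp
  qed
  then show "pi / 4 \<le> H N" using d by simp
  have "(\<Sum>M\<in>lev N. 1 / pp M - arctan (1 / pp M)) \<le> (\<Sum>M\<in>lev N. (1 / pp M) / (real N + 1))"
  proof (rule sum_mono)
    fix M assume M: "M \<in> lev N"
    define x where "x = 1 / pp M"
    have x: "0 \<le> x" "x \<le> 1" "x \<le> 1 / (real N + 1)"
      using pos[OF M] pp_lev[OF M] unfolding x_def by (auto simp: field_simps)
    have "x - arctan x \<le> x ^ 3" using x_arctan x by auto
    also have "\<dots> \<le> x * x" using x by (simp add: power3_eq_cube mult_left_le)
    also have "\<dots> \<le> x / (real N + 1)"
      using x mult_left_mono[OF x(3) x(1)] by (simp add: field_simps)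
    finally show "1 / pp M - arctan (1 / pp M) \<le> (1 / pp M) / (real N + 1)" unfolding x_def .
  qed
  also have "\<dots> = H N / (real N + 1)" unfolding H_def by (simp add: sum_divide_distrib)
  also have "\<dots> \<le> 1 / (real N + 1)" using H_le1 by (simp add: divide_right_mono)
  finally show "H N \<le> pi / 4 + 1 / (real N + 1)" using d by simp
qed

lemma H_lim: "H \<longlonglongrightarrow> pi / 4"
proof (rule tendsto_sandwich[of "\<lambda>_. pi / 4" _ _ "\<lambda>N. pi / 4 + 1 / (real N + 1)"])
  show "\<forall>\<^sub>F n in sequentially. pi / 4 \<le> H n" using H_bounds by simp
  show "\<forall>\<^sub>F n in sequentially. H n \<le> pi / 4 + 1 / (real n + 1)" using H_bounds by simp
  show "(\<lambda>n. pi / 4) \<longlonglongrightarrow> pi / 4" by simp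
  have "(\<lambda>n. 1 / (real n + 1)) \<longlonglongrightarrow> 0"
    using LIMSEQ_inverse_real_of_nat by (simp add: inverse_eq_divide add.commute)
  then show "(\<lambda>n. pi / 4 + 1 / (real n + 1)) \<longlonglongrightarrow> pi / 4"
    using tendsto_add[of "\<lambda>_. pi/4" "pi/4" sequentially] by fastforce
qed


definition TT :: "nat \<Rightarrow> quad set" where "TT N = (\<Union>k<N. lev k)"

lemma TT_sum: "sum Fq (TT N) = 1 - H N"
proof -
  have "sum Fq (TT N) = (\<Sum>k<N. sum Fq (lev k))"
    unfolding TT_def
    by (rule sum.UNION_disjoint) (use lev_finite lev_disj in auto)
  then show ?thesis using partial by simp
qed

lemma TT_finite: "finite (TT N)"
  unfolding TT_def using lev_finite by auto

lemma TT_S: "TT N \<subseteq> SS"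
  unfolding TT_def using lev_S by auto

lemma finite_in_TT:
  assumes "finite Y" "Y \<subseteq> SS"
  shows "\<exists>N. Y \<subseteq> TT N"
proof -
  have "\<forall>y\<in>Y. \<exists>n. y \<in> lev n" using assms S_cover by blast
  then obtain lv where lv: "\<And>y. y \<in> Y \<Longrightarrow> y \<in> lev (lv y)" by metis
  have "Y \<subseteq> TT (Suc (\<Sum>y\<in>Y. lv y))"
  proof
    fix y assume y: "y \<in> Y"
    have "lv y \<le> (\<Sum>y\<in>Y. lv y)" using y assms(1) by (intro member_le_sum) auto
    then show "y \<in> TT (Suc (\<Sum>y\<in>Y. lv y))" unfolding TT_def using lv[OF y] by auto
  qed
  then show ?thesis by blast
qed

lemma main_has_sum: "(Fq has_sum (1 - pi / 4)) SS"
  unfolding has_sum_def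
proof (rule tendstoI)
  fix e :: real assume e: "e > 0"
  have lim: "(\<lambda>N. 1 - H N) \<longlonglongrightarrow> 1 - pi / 4"
    using H_lim by (intro tendsto_intros)
  have "\<forall>\<^sub>F N in sequentially. dist (1 - H N) (1 - pi / 4) < e"
    by (rule tendstoD[OF lim e])
  then obtain N where N: "dist (1 - H N) (1 - pi / 4) < e"
    unfolding eventually_sequentially by blast
  show "\<forall>\<^sub>F Y in finite_subsets_at_top SS. dist (sum Fq Y) (1 - pi / 4) < e"
    unfolding eventually_finite_subsets_at_top
  proof (intro exI[of _ "TT N"] conjI allI impI)
    show "finite (TT N)" by (rule TT_finite)
    show "TT N \<subseteq> SS" by (rule TT_S)
    fix Y assume Y: "finite Y \<and> TT N \<subseteq> Y \<and> Y \<subseteq> SS"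
    have Y1: "finite Y" and Y2: "TT N \<subseteq> Y" and Y3: "Y \<subseteq> SS" using Y by simp_all
    have lo: "sum Fq (TT N) \<le> sum Fq Y"
      by (rule sum_mono2[OF Y1 Y2]) (simp add: Fq_nonneg)
    obtain M where M: "Y \<subseteq> TT M" using finite_in_TT[OF Y1 Y3] by blast
    have "sum Fq Y \<le> sum Fq (TT M)"
      by (rule sum_mono2[OF TT_finite M]) (simp add: Fq_nonneg)
    also have "\<dots> \<le> 1 - pi / 4" using TT_sum H_bounds(1)[of M] by simp
    finally have up: "sum Fq Y \<le> 1 - pi / 4" .
    have "1 - pi / 4 - (1 - H N) < e" using N H_bounds(1)[of N] by (simp add: dist_real_def)
    moreover have "dist (sum Fq Y) (1 - pi / 4) = (1 - pi / 4) - sum Fq Y"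
      using up by (simp add: dist_real_def)
    ultimately show "dist (sum Fq Y) (1 - pi / 4) < e"
      using lo TT_sum[of N] by linarith
  qed
qed

theorem theorem11:
  shows "((\<lambda>(a::nat, b::nat, c::nat, d::nat).
            1 / (real (a * c + b * d) * real (a * (a + c) + b * (b + d))
                 * real ((a + c) * c + (b + d) * d)))
          has_sum (1 - pi / 4))
         {(a, b, c, d). b \<le> a \<and> d \<le> c \<and> int a * int d - int b * int c = 1}"
  by (rule main_has_sum[unfolded Fq_def SS_def])

end
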